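(* Let $A$ be a finite alphabet, let $d: A^n \to A$ be a block map and fix $x_1 \cdots x_{n-1} \in A^{n-1}$. If $d$ is weakly progressive, then the restriction \[\tau_d: Z(x_1 \cdots x_{n-1}) \to \bigcup_{a \in A} Z(d(x_1 \cdots x_{n-1} a))\] is (well defined and) bijective.
   Context: $A$ is a finite set with the discrete topology; $\mathbb{N}=\{1,2,3,\dots\}$; $A^{\mathbb{N}}$ is the space of one-sided infinite sequences over $A$ with the product topology; $A^k$ is the set of words of length $k$. For a word $\mu$, the cylinder set is $Z(\mu)=\{x\in A^{\mathbb{N}} : x_1\cdots x_{|\mu|}=\mu\}$ (for the empty word this is $A^{\mathbb{N}}$). A block map is a function $d: A^n \to A$, and $\tau_d: A^{\mathbb{N}}\to A^{\mathbb{N}}$ is defined by $\tau_d(x)_i = d(x_i \cdots x_{i+n-1})$. For $w=w_1\cdots w_{n-1}\in A^{n-1}$ and $m\in\mathbb{N}$, define $p_{d,m}^{w}: A^m\to A^m$ by letting, for $\beta\in A^m$, the $j$-th letter ($1\le j\le m$) of $p_{d,m}^{w}(\beta)$ be $d$ applied to the subword of length $n$ starting at position $j$ of the concatenated word $w\beta$ (so $p_{d,m}^{w}(a\alpha)=d(w_1\cdots w_{n-1}a)\,d(w_2\cdots w_{n-1}a\alpha_1)\cdots$). The block map $d$ is weakly progressive of order $m$ if for every $\mu \in A^n$ and every $\nu \in A^m$ with $d(\mu)= \nu_1$ there exists a unique $a \in A$ such that the equation $p_{d,m}^{\mu_1 \cdots \mu_{n-1}}(a \alpha)=\nu$ has a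 solution $\alpha \in A^{m-1}$. The block map $d$ is weakly progressive if it is weakly progressive of order $m$ for some $m\in\mathbb{N}$. *)

theory Defs
  imports Main
begin

(* Alphabet A = the finite type 'a.  Words are lists; A^k = lists of length k.
   Points of A^N are functions nat => 'a, where position i (1-based in the paper)
   is stored at index i-1. *)

definition cylinder :: "'a list \<Rightarrow> (nat \<Rightarrow> 'a) set" where
  "cylinder \<mu> = {x. \<forall>i < length \<mu>. x i = \<mu> ! i}"

definition tau :: "('a list \<Rightarrow> 'a) \<Rightarrow> nat \<Rightarrow> (nat \<Rightarrow> 'a) \<Rightarrow> (nat \<Rightarrow> 'a)" where
  "tau d n x = (\<lambda>i. d (map x [i..<i + n]))"

definition pmap :: "('a list \<Rightarrow> 'a) \<Rightarrow> nat \<Rightarrow> nat \<Rightarrow> 'a list \<Rightarrow> 'a list \<Rightarrow> 'a list" where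
  "pmap d n m w \<beta> = map (\<lambda>j. d (take n (drop j (w @ \<beta>)))) [0..<m]"

definition weakly_progressive_of_order ::
  "('a list \<Rightarrow> 'a) \<Rightarrow> nat \<Rightarrow> nat \<Rightarrow> bool" where
  "weakly_progressive_of_order d n m \<longleftrightarrow>
     (\<forall>\<mu> \<nu>. length \<mu> = n \<longrightarrow> length \<nu> = m \<longrightarrow> d \<mu> = \<nu> ! 0 \<longrightarrow>
        (\<exists>!a. \<exists>\<alpha>. length \<alpha> = m - 1 \<and> pmap d n m (take (n - 1) \<mu>) (a # \<alpha>) = \<nu>))"

definition weakly_progressive :: "('a list \<Rightarrow> 'a) \<Rightarrow> nat \<Rightarrow> bool" where
  "weakly_progressive d n \<longleftrightarrow> (\<exists>m \<ge> 1. weakly_progressive_of_order d n m)"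

end

theory Submission
  imports Defs
begin
lemma win: assumes "j < m" "n \<ge> 1"
  shows "take n (drop j (map x [s..<s+n-1+m])) = map x [s+j..<s+j+n]"
proof -
  have "s + j + n \<le> s+n-1+m" using assms by simp
  thus ?thesis by (simp add: take_map drop_map take_upt drop_upt)
qed
lemma pmap_tau: assumes "n \<ge> 1"
  shows "pmap d n m (map x [s..<s+n-1]) (map x [s+n-1..<s+n-1+m]) = map (tau d n x) [s..<s+m]"
proof -
  have e: "map x [s..<s+n-1] @ map x [s+n-1..<s+n-1+m] = map x [s..<s+n-1+m]"
  proof -
    have "[s..<s+n-1+m] = [s..<s+n-1] @ [s+n-1..<s+n-1+m]" by (rule upt_add_eq_append) (use assms in simp)
    thus ?thesis by simp
  qed
  show ?thesis unfolding pmap_def tau_def e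
  proof (rule nth_equalityI)
    fix i assume "i < length (map (\<lambda>j. d (take n (drop j (map x [s..<s + n - 1 + m])))) [0..<m])"
    hence i: "i < m" by simp
    show "map (\<lambda>j. d (take n (drop j (map x [s..<s + n - 1 + m])))) [0..<m] ! i =
          map (\<lambda>i. d (map x [i..<i + n])) [s..<s + m] ! i"
      using win[OF i assms, of x s] i by simp
  qed simp
qed
lemma pmap_nth: "j < m \<Longrightarrow> pmap d n m w b ! j = d (take n (drop j (w @ b)))"
  by (simp add: pmap_def)

lemma pmap_len[simp]: "length (pmap d n m w b) = m"
  by (simp add: pmap_def)

lemma upt_split_last: "n \<ge> 1 \<Longrightarrow> [s..<s+n] = [s..<s+n-1] @ [s+n-1]"
proof -
  assume "n \<ge> 1"
  hence eq: "s + n = Suc (s + n - 1)" by simp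
  show ?thesis using \<open>n \<ge> 1\<close> by (subst eq) (rule upt_Suc_append, simp)
qed

lemma tau_in: assumes "n \<ge> 1" "length w = n - 1" "x \<in> cylinder w"
  shows "tau d n x \<in> (\<Union>a. cylinder [d (w @ [a])])"
proof -
  have "map x [0..<n] = w @ [x (n-1)]"
  proof -
    have "map x [0..<n-1] = w" using assms(2,3)
      by (auto simp: cylinder_def intro!: nth_equalityI)
    moreover have "[0..<n] = [0..<n-1] @ [n-1]" using upt_split_last[OF assms(1), of 0] by simp
    ultimately show ?thesis by simp
  qed
  thus ?thesis by (auto simp: cylinder_def tau_def)
qed

lemma surj1: fixes d :: "'a::finite list \<Rightarrow> 'a"
  assumes wp: "weakly_progressive_of_order d n 1" and n: "n \<ge> 1" and u: "length u = n - 1"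
  shows "\<exists>b. d (u @ [b]) = c"
proof -
  have "inj (\<lambda>a. d (u @ [a]))"
  proof (rule injI)
    fix a1 a2 assume h: "d (u @ [a1]) = d (u @ [a2])"
    have tk: "take (n-1) (u @ [a1]) = u" using u by simp
    have tn: "\<And>a. take n (u @ [a]) = u @ [a]" using u n by simp
    from wp[unfolded weakly_progressive_of_order_def, rule_format,
        of "u @ [a1]" "[d (u @ [a1])]"] u n
    have "\<exists>!a. \<exists>\<alpha>. length \<alpha> = 0 \<and> pmap d n 1 u (a # \<alpha>) = [d (u @ [a1])]"
      by (simp add: tk)
    moreover have "pmap d n 1 u [a1] = [d (u @ [a1])]" "pmap d n 1 u [a2] = [d (u @ [a1])]"
      using h tn by (simp_all add: pmap_def)
    ultimately show "a1 = a2" by auto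
  qed
  hence "surj (\<lambda>a. d (u @ [a]))" by (simp add: finite_UNIV_inj_surj)
  thus ?thesis unfolding surj_def by (metis (mono_tags))
qed

theorem proposition3p10:
  fixes d :: "'a::finite list \<Rightarrow> 'a" and n :: nat and w :: "'a list"
  assumes "n \<ge> 1"
    and "length w = n - 1"
    and "weakly_progressive d n"
  shows "bij_betw (tau d n) (cylinder w) (\<Union>a. cylinder [d (w @ [a])])"
proof -
  note n = assms(1) and lw = assms(2)
  obtain m where m1: "m \<ge> 1" and wpm: "weakly_progressive_of_order d n m"
    using assms(3) unfolding weakly_progressive_def by blast
  have uniq: "\<exists>!a. \<exists>\<alpha>. length \<alpha> = m - 1 \<and> pmap d n m u (a # \<alpha>) = map y [s..<s+m]"
    if "length u = n - 1" "d (u @ [b]) = y s" for u b y s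
  proof -
    have "take (n-1) (u @ [b]) = u" using that by simp
    moreover have "map y [s..<s+m] ! 0 = y s" using m1 by simp
    ultimately show ?thesis
      using wpm[unfolded weakly_progressive_of_order_def, rule_format, of "u @ [b]" "map y [s..<s+m]"]
        that n by simp
  qed
  have inj: "inj_on (tau d n) (cylinder w)"
  proof (rule inj_onI)
    fix x x' assume x: "x \<in> cylinder w" and x': "x' \<in> cylinder w" and t: "tau d n x = tau d n x'"
    have "x k = x' k" for k
    proof (induction k rule: less_induct)
      case (less k)
      show ?case
      proof (cases "k < n - 1")
        case True thus ?thesis using x x' lw by (simp add: cylinder_def)
      next
        case False
        define s where "s = k - (n-1)"
        have ks: "k = s + n - 1" using False n unfolding s_def by simp
        have ctx: "map x [s..<s+n-1] = map x' [s..<s+n-1]"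
          using less ks by (auto intro!: map_cong)
        define u where "u = map x [s..<s+n-1]"
        have lu: "length u = n - 1" using n unfolding u_def by simp
        have split: "\<And>z. map z [s+n-1..<s+n-1+m] = z k # map z [k+1..<k+m]"
          using m1 ks by (simp add: upt_conv_Cons)
        have p1: "pmap d n m u (x k # map x [k+1..<k+m]) = map (tau d n x) [s..<s+m]"
          using pmap_tau[OF n, of d m x s, unfolded split] unfolding u_def .
        have p2: "pmap d n m u (x' k # map x' [k+1..<k+m]) = map (tau d n x) [s..<s+m]"
          using pmap_tau[OF n, of d m x' s, unfolded split] unfolding u_def ctx t .
        have "d (u @ [x k]) = tau d n x s"
          unfolding u_def tau_def using upt_split_last[OF n, of s] ks by simp
        note U = uniq[where y="tau d n x" and s=s, OF lu this]
        have l: "length (map x [k+1..<k+m]) = m-1" "length (map x' [k+1..<k+m]) = m-1" by simp_all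
        have P1: "\<exists>\<alpha>. length \<alpha> = m - 1 \<and> pmap d n m u (x k # \<alpha>) = map (tau d n x) [s..<s+m]"
          using l(1) p1 by blast
        have P2: "\<exists>\<alpha>. length \<alpha> = m - 1 \<and> pmap d n m u (x' k # \<alpha>) = map (tau d n x) [s..<s+m]"
          using l(2) p2 by blast
        show ?thesis using U P1 P2 by blast
      qed
    qed
    thus "x = x'" by auto
  qed
  have sur: "(\<Union>a. cylinder [d (w @ [a])]) \<subseteq> tau d n ` cylinder w"
  proof
    fix y assume "y \<in> (\<Union>a. cylinder [d (w @ [a])])"
    then obtain a0 where a0: "d (w @ [a0]) = y 0" by (auto simp: cylinder_def)
    define stp where "stp u s = (SOME a. \<exists>\<alpha>. length \<alpha> = m - 1 \<and> pmap d n m u (a # \<alpha>) = map y [s..<s+m])" for u s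
    define ctx where "ctx = rec_nat w (\<lambda>s u. drop 1 (u @ [stp u s]))"
    have ctx0: "ctx 0 = w" and ctxS: "\<And>s. ctx (Suc s) = drop 1 (ctx s @ [stp (ctx s) s])"
      unfolding ctx_def by simp_all
    have len: "length (ctx s) = n - 1" for s
      by (induction s) (use lw n in \<open>simp_all add: ctx0 ctxS\<close>)
    have stpP: "\<exists>\<alpha>. length \<alpha> = m - 1 \<and> pmap d n m u (stp u s # \<alpha>) = map y [s..<s+m]"
      if "length u = n - 1" "d (u @ [b]) = y s" for u b s
      unfolding stp_def using uniq[where y=y and s=s, OF that] by (rule someI_ex[OF ex1_implies_ex])
    have inv: "\<exists>b. d (ctx s @ [b]) = y s" for s
    proof (induction s)
      case 0 thus ?case using a0 ctx0 by auto
    next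
      case (Suc s)
      then obtain b where b: "d (ctx s @ [b]) = y s" by blast
      show ?case
      proof (cases "m = 1")
        case True
        show ?thesis using surj1[OF wpm[unfolded True] n len] by blast
      next
        case False
        obtain \<alpha> where al: "length \<alpha> = m - 1" and p: "pmap d n m (ctx s) (stp (ctx s) s # \<alpha>) = map y [s..<s+m]"
          using stpP[OF len b] by blast
        have m2: "1 < m" using False m1 by simp
        have "pmap d n m (ctx s) (stp (ctx s) s # \<alpha>) ! 1 = y (Suc s)"
          using p m2 by simp
        moreover have "pmap d n m (ctx s) (stp (ctx s) s # \<alpha>) ! 1 = d (take n (drop 1 (ctx s @ stp (ctx s) s # \<alpha>)))"
          by (rule pmap_nth[OF m2])
        moreover obtain a1 r where ar: "\<alpha> = a1 # r" using al m2 by (cases \<alpha>) auto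
        moreover have "take n (drop 1 (ctx s @ stp (ctx s) s # a1 # r)) = ctx (Suc s) @ [a1]"
        proof -
          define L where "L = ctx s @ [stp (ctx s) s]"
          have lL: "length L = n" using len[of s] n unfolding L_def by simp
          have "ctx s @ stp (ctx s) s # a1 # r = L @ a1 # r" by (simp add: L_def)
          moreover have "drop 1 (L @ a1 # r) = drop 1 L @ a1 # r" using lL n by simp
          moreover have "take n (drop 1 L @ a1 # r) = drop 1 L @ [a1]" using lL n by (simp add: take_append)
          ultimately show ?thesis unfolding ctxS L_def by simp
        qed
        ultimately show ?thesis by auto
      qed
    qed
    define x where "x k = (if k < n - 1 then w ! k else stp (ctx (k - (n-1))) (k - (n-1)))" for k
    have xs: "x (s + n - 1) = stp (ctx s) s" for s using n unfolding x_def by auto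
    have ctxx: "ctx s = map x [s..<s+n-1]" for s
    proof (induction s)
      case 0 thus ?case using lw by (auto simp: ctx0 x_def intro!: nth_equalityI)
    next
      case (Suc s)
      have "ctx (Suc s) = drop 1 (map x [s..<s+n])"
      proof -
        have "ctx s @ [stp (ctx s) s] = map x [s..<s+n]"
        proof -
          have "ctx s @ [stp (ctx s) s] = map x [s..<s+n-1] @ [x (s+n-1)]"
            by (simp only: xs[of s] Suc)
          thus ?thesis unfolding upt_split_last[OF n, of s] by (simp only: map_append list.map)
        qed
        thus ?thesis unfolding ctxS by simp
      qed
      thus ?case by (simp add: drop_map)
    qed
    have xc: "x \<in> cylinder w" using lw by (auto simp: cylinder_def x_def)
    have "tau d n x = y"
    proof
      fix s
      obtain b where b: "d (ctx s @ [b]) = y s" using inv by blast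
      obtain \<alpha> where p: "pmap d n m (ctx s) (stp (ctx s) s # \<alpha>) = map y [s..<s+m]"
        using stpP[OF len b] by blast
      have "pmap d n m (ctx s) (stp (ctx s) s # \<alpha>) ! 0 = y s" using p m1 by simp
      hence "d (ctx s @ [stp (ctx s) s]) = y s"
        using m1 len[of s] n by (simp add: pmap_nth)
      thus "tau d n x s = y s"
        unfolding tau_def upt_split_last[OF n, of s] using ctxx xs by simp
    qed
    with xc show "y \<in> tau d n ` cylinder w" by blast
  qed
  have "tau d n ` cylinder w \<subseteq> (\<Union>a. cylinder [d (w @ [a])])"
    using tau_in[OF n lw] by blast
  with sur inj show ?thesis unfolding bij_betw_def by blast
qed

end
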